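(* Let $\mathcal{A}$ be an automaton over $\Sigma$. Then there exists an automaton $\mathcal{B}$ over $\Sigma$ such that $\mathfrak{J}_{\exists\boxplus}(\mathcal{B})=\mathfrak{J}(\mathcal{A})$.
   Context: Automata are nondeterministic B\"uchi automata over infinite words; $\mathfrak{L}(\mathcal{A})$ is the accepted language. For $w\in\Sigma^\omega$, $\Psi(w)\in\mathbb{N}_\infty^\Sigma$ gives the number of occurrences of each letter ($\infty$ if infinite); for finite $x$, $\Psi(x)\in\mathbb{N}^\Sigma$. $w\sim w'$ iff $\Psi(w)=\Psi(w')$; $\mathfrak{J}(\mathcal{A})=\{w:\exists w'\sim w,\ w'\in\mathfrak{L}(\mathcal{A})\}$. For $k\ge1$, $w\sim_{k\boxplus}w'$ means $w=x_1x_2\cdots$, $w'=y_1y_2\cdots$ with $|x_i|=|y_i|=k$ and $\Psi(x_i)=\Psi(y_i)$. $\mathfrak{J}_{\exists\boxplus}(\mathcal{A})=\{w\in\Sigma^\omega:\exists k\ge1\ \exists w'\sim_{k\boxplus}w,\ w'\in\mathfrak{L}(\mathcal{A})\}$. *)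

theory Defs
  imports Main "HOL-Library.Extended_Nat"
begin

record ('q, 'a) nba =
  alphabet :: "'a set"
  states :: "'q set"
  initial :: "'q set"
  trans :: "('q \<times> 'a \<times> 'q) set"
  accepting :: "'q set"

definition nba_wf :: "('q, 'a) nba \<Rightarrow> bool" where
  "nba_wf A \<longleftrightarrow> finite (alphabet A) \<and> finite (states A) \<and>
     initial A \<subseteq> states A \<and> accepting A \<subseteq> states A \<and>
     trans A \<subseteq> states A \<times> alphabet A \<times> states A"

definition omega_words :: "'a set \<Rightarrow> (nat \<Rightarrow> 'a) set" where
  "omega_words S = {w. \<forall>i. w i \<in> S}"

definition nba_lang :: "('q, 'a) nba \<Rightarrow> (nat \<Rightarrow> 'a) set" where
  "nba_lang A = {w. w \<in> omega_words (alphabet A) \<and>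
     (\<exists>r. r 0 \<in> initial A \<and> (\<forall>i. (r i, w i, r (Suc i)) \<in> trans A) \<and>
          infinite {i. r i \<in> accepting A})}"

definition parikh_inf :: "(nat \<Rightarrow> 'a) \<Rightarrow> 'a \<Rightarrow> enat" where
  "parikh_inf w a = (if finite {i. w i = a} then enat (card {i. w i = a}) else \<infinity>)"

definition parikh_fin :: "'a list \<Rightarrow> 'a \<Rightarrow> nat" where
  "parikh_fin x a = count_list x a"

definition block :: "nat \<Rightarrow> (nat \<Rightarrow> 'a) \<Rightarrow> nat \<Rightarrow> 'a list" where
  "block k w i = map w [i * k..<(Suc i) * k]"

definition block_equiv :: "nat \<Rightarrow> (nat \<Rightarrow> 'a) \<Rightarrow> (nat \<Rightarrow> 'a) \<Rightarrow> bool" where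
  "block_equiv k w w' \<longleftrightarrow> (\<forall>i. parikh_fin (block k w i) = parikh_fin (block k w' i))"

definition J :: "('q, 'a) nba \<Rightarrow> (nat \<Rightarrow> 'a) set" where
  "J A = {w \<in> omega_words (alphabet A). \<exists>w'. parikh_inf w' = parikh_inf w \<and> w' \<in> nba_lang A}"

definition J_ex_box :: "('q, 'a) nba \<Rightarrow> (nat \<Rightarrow> 'a) set" where
  "J_ex_box A = {w \<in> omega_words (alphabet A).
     \<exists>k\<ge>1. \<exists>w'. block_equiv k w w' \<and> w' \<in> nba_lang A}"

end

theory Submission
  imports Defs "HOL-Library.Multiset"
begin


definition stp :: "'a set \<Rightarrow> 'a set \<Rightarrow> 'a \<Rightarrow> 'a set" where
  "stp I S b = (if insert b S = I then {} else insert b S)"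

lemma p2_sound:
  assumes st: "\<forall>j. s (Suc j) = stp I (s j) (v j)" and inf: "infinite {j. s j = {}}" and a: "a \<in> I"
  shows "infinite {j. v j = a}"
proof
  assume "finite {j. v j = a}"
  then obtain m where "\<forall>j. v j = a \<longrightarrow> j \<le> m" unfolding finite_nat_set_iff_bounded_le by auto
  then have T0: "\<forall>j\<ge>Suc m. v j \<noteq> a" by auto
  define T0 where "T0 = Suc m"
  note T0 = T0[folded T0_def]
  have "\<exists>T\<ge>T0. s T = {}" using inf unfolding infinite_nat_iff_unbounded_le by auto
  then obtain T where T: "T \<ge> T0" "s T = {}" by blast
  have one: "s (Suc j) = insert (v j) (s j)" if "a \<notin> s j" "v j \<noteq> a" for j
  proof -
    have "insert (v j) (s j) \<noteq> I" using that a by auto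
    then show ?thesis using st unfolding stp_def by simp
  qed
  have all: "a \<notin> s (T+n) \<and> s (Suc (T+n)) \<noteq> {}" for n
  proof (induction n)
    case 0
    show ?case using one[of T] T T0 by auto
  next
    case (Suc n)
    have h1: "a \<notin> s (T+n)" using Suc.IH by simp
    have h2: "v (T+n) \<noteq> a" using T T0 by simp
    have an: "a \<notin> s (T + Suc n)" using one[OF h1 h2] h1 h2 by simp
    then show ?case using one[of "T + Suc n"] T T0 by auto
  qed
  have "{j. s j = {}} \<subseteq> {..T}"
  proof
    fix j assume "j \<in> {j. s j = {}}"
    then have sj: "s j = {}" by simp
    show "j \<in> {..T}"
    proof (rule ccontr)
      assume "j \<notin> {..T}"
      then have "T < j" by simp
      then obtain n where "j = Suc (T + n)" using less_imp_Suc_add by blast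
      then show False using all[of n] sj by simp
    qed
  qed
  then show False using inf finite_subset by blast
qed

lemma p2_complete:
  assumes fin: "finite I" and vI: "\<forall>j. v j \<in> I" and inf: "\<forall>a\<in>I. infinite {j. v j = a}"
    and st: "\<forall>j. s (Suc j) = stp I (s j) (v j)" and s0: "s 0 \<subseteq> I"
  shows "infinite {j. s j = {}}"
proof
  assume "finite {j. s j = {}}"
  then obtain m where "\<forall>j. s j = {} \<longrightarrow> j \<le> m" unfolding finite_nat_set_iff_bounded_le by auto
  then have T: "\<forall>j\<ge>Suc m. s j \<noteq> {}" by auto
  define T where "T = Suc m"
  note T = T[folded T_def]
  have sub: "s j \<subseteq> I" for j
    by (induction j) (use s0 st vI in \<open>auto simp: stp_def\<close>)
  have step: "s (Suc j) = insert (v j) (s j) \<and> insert (v j) (s j) \<noteq> I" if "j \<ge> T" for j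
  proof -
    have "s (Suc j) \<noteq> {}" using T that by simp
    then show ?thesis using st[rule_format, of j] unfolding stp_def by (auto split: if_splits)
  qed
  have mono: "s i \<subseteq> s (i + d)" if "i \<ge> T" for i d
    by (induction d) (use step that in auto)
  have "\<forall>a\<in>I. \<exists>t\<ge>T. v t = a"
  proof
    fix a assume "a \<in> I"
    then have "infinite {j. v j = a}" using inf by blast
    then show "\<exists>t\<ge>T. v t = a" unfolding infinite_nat_iff_unbounded_le by auto
  qed
  then have "\<exists>t. \<forall>a\<in>I. t a \<ge> T \<and> v (t a) = a" by (rule bchoice)
  then obtain t where t: "\<forall>a\<in>I. t a \<ge> T \<and> v (t a) = a" by blast
  have ne: "I \<noteq> {}" using vI by auto
  define M where "M = Max (t ` I)"
  obtain a0 where a0: "a0 \<in> I" using ne by blast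
  have "t a0 \<le> M" using fin a0 unfolding M_def by simp
  then have MT: "M \<ge> T" using t a0 by force
  have "I \<subseteq> s (Suc M)"
  proof
    fix a assume a: "a \<in> I"
    have "t a \<le> M" using a fin unfolding M_def by auto
    have "a \<in> s (Suc (t a))" using step[of "t a"] t a by auto
    also have "\<dots> \<subseteq> s (Suc (t a) + (M - t a))" 
    proof -
      have "T \<le> Suc (t a)" using t a by (simp add: le_SucI)
      then show ?thesis using mono by blast
    qed
    also have "Suc (t a) + (M - t a) = Suc M" using \<open>t a \<le> M\<close> by simp
    finally show "a \<in> s (Suc M)" .
  qed
  then have "s (Suc M) = I" using sub by auto
  then show False using step[OF MT] by auto
qed



definition ren :: "('q \<Rightarrow> 'r) \<Rightarrow> ('q,'a) nba \<Rightarrow> ('r,'a) nba" where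
  "ren f A = \<lparr>alphabet = alphabet A, states = f ` states A, initial = f ` initial A,
     trans = (\<lambda>(p,a,p'). (f p, a, f p')) ` trans A, accepting = f ` accepting A\<rparr>"

lemma ren_wf: "nba_wf A \<Longrightarrow> nba_wf (ren f A)"
  unfolding nba_wf_def ren_def by auto


lemma ren_lang:
  assumes wf: "nba_wf A" and inj: "inj_on f (states A)"
  shows "nba_lang (ren f A) = nba_lang A"
proof
  show "nba_lang A \<subseteq> nba_lang (ren f A)"
  proof
    fix w assume "w \<in> nba_lang A"
    then obtain r where w: "w \<in> omega_words (alphabet A)" and r0: "r 0 \<in> initial A"
      and rt: "\<forall>i. (r i, w i, r (Suc i)) \<in> trans A" and acc: "infinite {i. r i \<in> accepting A}"
      unfolding nba_lang_def by blast
    have "(f (r i), w i, f (r (Suc i))) \<in> trans (ren f A)" for i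
      using rt unfolding ren_def by force
    moreover have "infinite {i. f (r i) \<in> accepting (ren f A)}"
      using acc by (rule infinite_super[rotated]) (auto simp: ren_def)
    ultimately show "w \<in> nba_lang (ren f A)"
      using w r0 unfolding nba_lang_def by (auto simp: ren_def)
  qed
next
  show "nba_lang (ren f A) \<subseteq> nba_lang A"
  proof
    fix w assume "w \<in> nba_lang (ren f A)"
    then obtain r where w: "w \<in> omega_words (alphabet A)" and r0: "r 0 \<in> f ` initial A"
      and rt: "\<forall>i. (r i, w i, r (Suc i)) \<in> (\<lambda>(p,a,p'). (f p, a, f p')) ` trans A"
      and acc: "infinite {i. r i \<in> f ` accepting A}"
      unfolding nba_lang_def by (auto simp: ren_def)
    define g where "g = inv_into (states A) f"
    have rs: "r i \<in> f ` states A" for i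
    proof (cases i)
      case 0 then show ?thesis using r0 wf unfolding nba_wf_def by auto
    next
      case (Suc j) then show ?thesis using rt[rule_format, of j] wf unfolding nba_wf_def by auto
    qed
    have gs: "g (r i) \<in> states A" "f (g (r i)) = r i" for i
      using rs[of i] unfolding g_def by (auto simp: inv_into_into f_inv_into_f)
    have gf: "g (f p) = p" if "p \<in> states A" for p
      using inj that unfolding g_def by simp
    have "(g (r i), w i, g (r (Suc i))) \<in> trans A" for i
    proof -
      obtain p a p' where t: "(p,a,p') \<in> trans A" "r i = f p" "w i = a" "r (Suc i) = f p'"
        using rt[rule_format, of i] by auto
      have "p \<in> states A" "p' \<in> states A" using t wf unfolding nba_wf_def by auto
      then show ?thesis using t gf by simp
    qed
    moreover have "g (r 0) \<in> initial A"
      using r0 gf wf unfolding nba_wf_def by auto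
    moreover have "infinite {i. g (r i) \<in> accepting A}"
      using acc by (rule infinite_super[rotated]) (use gf wf in \<open>auto simp: nba_wf_def\<close>)
    ultimately show "w \<in> nba_lang A" using w unfolding nba_lang_def
      by (intro CollectI conjI exI[of _ "\<lambda>i. g (r i)"]) auto
  qed
qed

lemma exists_nat_version:
  fixes B :: "('r, 'a) nba"
  assumes "nba_wf B"
  shows "\<exists>B' :: (nat, 'a) nba. nba_wf B' \<and> alphabet B' = alphabet B \<and> nba_lang B' = nba_lang B"
proof -
  have "finite (states B)" using assms unfolding nba_wf_def by simp
  then obtain f :: "'r \<Rightarrow> nat" and n where "f ` states B = {i. i < n} \<and> inj_on f (states B)"
    using finite_imp_inj_to_nat_seg[of "states B"] by metis
  then have "inj_on f (states B)" by blast
  then have "nba_lang (ren f B) = nba_lang B" by (rule ren_lang[OF assms])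
  moreover have "alphabet (ren f B) = alphabet B" by (simp add: ren_def)
  ultimately show ?thesis using ren_wf[OF assms] by blast
qed



lemma cnt_card: "count_list (map w [0..<N]) a = card {i. i < N \<and> w i = a}"
proof (induction N)
  case 0 then show ?case by simp
next
  case (Suc N)
  have e: "{i. i < Suc N \<and> w i = a} = (if w N = a then insert N {i. i < N \<and> w i = a} else {i. i < N \<and> w i = a})"
    by (auto simp: less_Suc_eq)
  show ?case using Suc by (simp add: e)
qed

lemma cnt_blocks: "count_list (map w [0..<n*k]) a = (\<Sum>i<n. count_list (block k w i) a)"
proof (induction n)
  case 0 then show ?case by simp
next
  case (Suc n)
  have "[0..<Suc n * k] = [0..<n*k] @ [n*k..<Suc n * k]"
    using upt_add_eq_append[of 0 "n*k" k] by (simp add: add.commute)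
  then show ?case using Suc by (simp add: block_def)
qed

lemma card_prefix_eq:
  assumes "block_equiv k w w'"
  shows "card {i. i < n*k \<and> w i = a} = card {i. i < n*k \<and> w' i = a}"
  using assms unfolding block_equiv_def parikh_fin_def
  by (simp add: cnt_card[symmetric] cnt_blocks)

lemma finite_bound:
  assumes "finite S"
  shows "card {i. i < N \<and> i \<in> S} \<le> card S"
  using assms by (intro card_mono) auto

lemma finite_eventually:
  assumes "finite (S::nat set)" "\<forall>i\<in>S. i < N"
  shows "card {i. i < N \<and> i \<in> S} = card S"
  using assms by (intro arg_cong[where f=card]) auto

lemma infinite_large:
  assumes "infinite (S::nat set)"
  shows "\<exists>N. card {i. i < N \<and> i \<in> S} \<ge> c"
proof -
  obtain F where F: "F \<subseteq> S" "finite F" "card F = c" using infinite_arbitrarily_large[OF assms] by blast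
  define N where "N = Suc (Max (insert 0 F))"
  have "F \<subseteq> {i. i < N \<and> i \<in> S}" using F unfolding N_def
    by (auto simp: less_Suc_eq_le)
  then have "card F \<le> card {i. i < N \<and> i \<in> S}" by (intro card_mono) (auto simp: N_def)
  then show ?thesis using F by auto
qed

lemma card_mono_N:
  assumes "N \<le> M"
  shows "card {i. i < N \<and> i \<in> S} \<le> card {i. i < M \<and> i \<in> (S::nat set)}"
  using assms by (intro card_mono) auto

lemma one_dir:
  assumes k: "k \<ge> 1" and be: "block_equiv k w w'" and fin: "finite {i. w i = a}"
  shows "finite {i. w' i = a} \<and> card {i. w' i = a} = card {i. w i = a}"
proof -
  let ?S = "{i. w i = a}" and ?S' = "{i. w' i = a}"
  have eq: "card {i. i < n*k \<and> i \<in> ?S} = card {i. i < n*k \<and> i \<in> ?S'}" for n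
    using card_prefix_eq[OF be, of n a] by simp
  have fin': "finite ?S'"
  proof (rule ccontr)
    assume "infinite ?S'"
    then obtain N where N: "card {i. i < N \<and> i \<in> ?S'} \<ge> Suc (card ?S)" using infinite_large by blast
    have "N \<le> N * k" using k by simp
    then have "card {i. i < N \<and> i \<in> ?S'} \<le> card {i. i < N*k \<and> i \<in> ?S'}" by (rule card_mono_N)
    also have "\<dots> = card {i. i < N*k \<and> i \<in> ?S}" using eq by simp
    also have "\<dots> \<le> card ?S" using fin by (rule finite_bound)
    finally show False using N by simp
  qed
  obtain N where N: "\<forall>i\<in>?S \<union> ?S'. i < N"
    using fin fin' by (metis finite_Un finite_nat_set_iff_bounded)
  have "N \<le> N * k" using k by simp
  then have b1: "\<forall>i\<in>?S. i < N*k" and b2: "\<forall>i\<in>?S'. i < N*k" using N by (meson UnI1 UnI2 less_le_trans)+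
  have c1: "card {i. i < N*k \<and> i \<in> ?S} = card ?S" using finite_eventually[OF fin b1] .
  have c2: "card {i. i < N*k \<and> i \<in> ?S'} = card ?S'" using finite_eventually[OF fin' b2] .
  show ?thesis using c1 c2 eq[of N] fin' by simp
qed

lemma block_equiv_sym: "block_equiv k w w' \<Longrightarrow> block_equiv k w' w"
  unfolding block_equiv_def by simp

lemma block_equiv_parikh:
  assumes k: "k \<ge> 1" and be: "block_equiv k w w'"
  shows "parikh_inf w = parikh_inf w'"
proof
  fix a
  show "parikh_inf w a = parikh_inf w' a"
  proof (cases "finite {i. w i = a}")
    case True
    then show ?thesis using one_dir[OF k be True] unfolding parikh_inf_def by simp
  next
    case False
    then have "infinite {i. w' i = a}" using one_dir[OF k block_equiv_sym[OF be]] by blast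
    then show ?thesis using False unfolding parikh_inf_def by simp
  qed
qed



definition good :: "('q,'a) nba \<Rightarrow> 'q \<Rightarrow> 'a set \<Rightarrow> bool" where
  "good A q I \<longleftrightarrow> q \<in> accepting A \<and> (\<exists>len ys qs. len > 0 \<and> qs 0 = q \<and> qs len = q \<and>
      (\<forall>j<len. (qs j, ys j, qs (Suc j)) \<in> trans A) \<and> I = ys ` {..<len})"

definition mkB :: "('q,'a) nba \<Rightarrow> ('q + 'a set \<times> 'a set, 'a) nba" where
  "mkB A = \<lparr>alphabet = alphabet A,
     states = Inl ` states A \<union> Inr ` (Pow (alphabet A) \<times> Pow (alphabet A)),
     initial = Inl ` initial A,
     trans = {(Inl p, b, Inl p') | p b p'. (p,b,p') \<in> trans A}
       \<union> {(Inl q, b, Inr (I, stp I {} b)) | q b I. good A q I \<and> I \<subseteq> alphabet A \<and> b \<in> I}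
       \<union> {(Inr (I,S), b, Inr (I, stp I S b)) | I S b. I \<subseteq> alphabet A \<and> S \<subseteq> alphabet A \<and> b \<in> I},
     accepting = Inr ` (Pow (alphabet A) \<times> {{}})\<rparr>"

lemma stp_sub: "stp I S b \<subseteq> insert b S"
  unfolding stp_def by auto

lemma good_states: "nba_wf A \<Longrightarrow> good A q I \<Longrightarrow> q \<in> states A"
  unfolding good_def nba_wf_def by auto

lemma mkB_wf:
  assumes "nba_wf A" shows "nba_wf (mkB A)"
proof -
  have fin: "finite (alphabet A)" "finite (states A)" using assms unfolding nba_wf_def by auto
  have "finite (states (mkB A))" using fin by (simp add: mkB_def)
  moreover have "trans (mkB A) \<subseteq> states (mkB A) \<times> alphabet (mkB A) \<times> states (mkB A)"
  proof
    fix x assume "x \<in> trans (mkB A)"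
    then consider (a) p b p' where "x = (Inl p, b, Inl p')" "(p,b,p') \<in> trans A"
      | (b) q b I where "x = (Inl q, b, Inr (I, stp I {} b))" "good A q I" "I \<subseteq> alphabet A" "b \<in> I"
      | (c) I S b where "x = (Inr (I,S), b, Inr (I, stp I S b))" "I \<subseteq> alphabet A" "S \<subseteq> alphabet A" "b \<in> I"
      unfolding mkB_def by auto
    then show "x \<in> states (mkB A) \<times> alphabet (mkB A) \<times> states (mkB A)"
    proof cases
      case a then show ?thesis using assms unfolding nba_wf_def mkB_def by auto
    next
      case b
      have "stp I {} b \<subseteq> alphabet A" using stp_sub[of I "{}" b] b by auto
      then show ?thesis using b good_states[OF assms b(2)] unfolding mkB_def by auto
    next
      case c
      have "stp I S b \<subseteq> alphabet A" using stp_sub[of I S b] c by auto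
      then show ?thesis using c unfolding mkB_def by auto
    qed
  qed
  ultimately show ?thesis using assms unfolding nba_wf_def by (auto simp: mkB_def)
qed



lemma cycle_word:
  assumes wf: "nba_wf A" and gd: "good A q I"
    and p0: "p 0 \<in> initial A" and pt: "\<forall>t<m. (p t, x t, p (Suc t)) \<in> trans A" and pm: "p m = q"
    and xs: "\<forall>t<m. x t \<in> alphabet A"
  shows "\<exists>u. u \<in> nba_lang A \<and> (\<forall>i<m. u i = x i) \<and> (\<forall>i\<ge>m. u i \<in> I) \<and> (\<forall>a\<in>I. infinite {i. u i = a})"
proof -
  obtain len ys qs where len: "len > 0" and q0: "qs 0 = q" and ql: "qs len = q"
    and qt: "\<forall>j<len. (qs j, ys j, qs (Suc j)) \<in> trans A" and I: "I = ys ` {..<len}"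
    and qacc: "q \<in> accepting A"
    using gd unfolding good_def by blast
  define u where "u i = (if i < m then x i else ys ((i - m) mod len))" for i
  define \<rho> where "\<rho> i = (if i < m then p i else qs ((i - m) mod len))" for i
  have ysA: "ys j \<in> alphabet A" if "j < len" for j
    using qt that wf unfolding nba_wf_def by blast
  have uw: "u \<in> omega_words (alphabet A)"
    unfolding omega_words_def u_def using xs ysA len by auto
  have r0: "\<rho> 0 \<in> initial A"
    using p0 pm q0 unfolding \<rho>_def by (cases m) auto
  have rt: "(\<rho> i, u i, \<rho> (Suc i)) \<in> trans A" for i
  proof (cases "Suc i < m")
    case True then show ?thesis using pt unfolding \<rho>_def u_def by auto
  next
    case False
    show ?thesis
    proof (cases "Suc i = m")
      case True
      then have "\<rho> (Suc i) = p (Suc i)" unfolding \<rho>_def using q0 pm by simp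
      then show ?thesis using pt True unfolding \<rho>_def u_def by auto
    next
      case False2: False
      with False have im: "i \<ge> m" by simp
      define j where "j = (i - m) mod len"
      have jl: "j < len" using len unfolding j_def by simp
      have "Suc i - m = Suc (i - m)" using im by simp
      then have nx: "(Suc i - m) mod len = (if Suc j = len then 0 else Suc j)"
        unfolding j_def by (simp add: mod_Suc)
      have "\<rho> (Suc i) = qs (Suc j)"
        using nx im ql q0 unfolding \<rho>_def by (auto simp: not_less)
      moreover have "\<rho> i = qs j" "u i = ys j" using im unfolding \<rho>_def u_def j_def by auto
      ultimately show ?thesis using qt jl by simp
    qed
  qed
  have racc: "infinite {i. \<rho> i \<in> accepting A}"
    unfolding infinite_nat_iff_unbounded_le
  proof
    fix N
    have "\<rho> (m + N * len) = q" unfolding \<rho>_def using q0 by simp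
    moreover have "m + N * len \<ge> N" using len by (simp add: trans_le_add2)
    ultimately show "\<exists>i\<ge>N. i \<in> {i. \<rho> i \<in> accepting A}" using qacc by blast
  qed
  have ul: "u \<in> nba_lang A"
    unfolding nba_lang_def using uw r0 rt racc by blast
  have uI: "\<forall>i\<ge>m. u i \<in> I" unfolding u_def I using len by auto
  have uinf: "infinite {i. u i = a}" if a: "a \<in> I" for a
  proof -
    obtain j0 where j0: "j0 < len" "ys j0 = a" using a I by auto
    show ?thesis
      unfolding infinite_nat_iff_unbounded_le
    proof
      fix N
      have "u (m + N * len + j0) = a" unfolding u_def using j0 len by simp
      moreover have "m + N * len + j0 \<ge> N"
      proof -
        have "N \<le> N * len" using len by simp
        then show ?thesis by linarith
      qed
      ultimately show "\<exists>i\<ge>N. i \<in> {i. u i = a}" by blast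
    qed
  qed
  show ?thesis using ul uI uinf unfolding u_def by auto
qed



lemma mkB_sound:
  assumes wf: "nba_wf A" and wl: "w \<in> nba_lang (mkB A)"
  shows "\<exists>u\<in>nba_lang A. parikh_inf u = parikh_inf w"
proof -
  let ?\<Sigma> = "alphabet A"
  obtain r where ww: "w \<in> omega_words ?\<Sigma>" and r0: "r 0 \<in> Inl ` initial A"
    and rt: "\<forall>i. (r i, w i, r (Suc i)) \<in> trans (mkB A)"
    and racc: "infinite {i. r i \<in> Inr ` (Pow ?\<Sigma> \<times> {{}})}"
    using wl unfolding nba_lang_def by (auto simp: mkB_def)
  have tr: "(x, b, y) \<in> trans (mkB A) \<longleftrightarrow>
     (\<exists>p p'. x = Inl p \<and> y = Inl p' \<and> (p,b,p') \<in> trans A)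
     \<or> (\<exists>q I. x = Inl q \<and> y = Inr (I, stp I {} b) \<and> good A q I \<and> I \<subseteq> ?\<Sigma> \<and> b \<in> I)
     \<or> (\<exists>I S. x = Inr (I,S) \<and> y = Inr (I, stp I S b) \<and> I \<subseteq> ?\<Sigma> \<and> S \<subseteq> ?\<Sigma> \<and> b \<in> I)" for x b y
    unfolding mkB_def by auto
  have "\<exists>t. r t \<notin> range Inl"
  proof -
    obtain t where "t \<in> {i. r i \<in> Inr ` (Pow ?\<Sigma> \<times> {{}})}" using racc not_finite_existsD by blast
    then have "r t \<notin> range Inl" by auto
    then show ?thesis by blast
  qed
  define n where "n = (LEAST t. r t \<notin> range Inl)"
  have rn: "r n \<notin> range Inl" unfolding n_def using \<open>\<exists>t. r t \<notin> range Inl\<close> by (rule LeastI_ex)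
  have bef: "r t \<in> range Inl" if "t < n" for t using not_less_Least[OF that[unfolded n_def]] by blast
  have "n \<noteq> 0" using rn r0 by auto
  then obtain m where nm: "n = Suc m" by (cases n) auto
  define p where "p t = projl (r t)" for t
  have rp: "r t = Inl (p t)" if "t \<le> m" for t using bef[of t] that nm unfolding p_def by auto
  obtain I where gd: "good A (p m) I" and IS: "I \<subseteq> ?\<Sigma>" and wm: "w m \<in> I"
    and rSm: "r (Suc m) = Inr (I, stp I {} (w m))"
    using rt[rule_format, of m] rp[of m] rn nm unfolding tr by auto
  have ph2: "\<exists>S. r (Suc m + j) = Inr (I, S)" for j
  proof (induction j)
    case 0 then show ?case using rSm by simp
  next
    case (Suc j)
    then obtain S where "r (Suc m + j) = Inr (I, S)" by blast
    then show ?case using rt[rule_format, of "Suc m + j"] unfolding tr by auto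
  qed
  define s where "s j = snd (projr (r (Suc m + j)))" for j
  define v where "v j = w (Suc m + j)" for j
  have rs: "r (Suc m + j) = Inr (I, s j)" for j using ph2[of j] unfolding s_def by auto
  have st: "\<forall>j. s (Suc j) = stp I (s j) (v j)"
  proof
    fix j
    show "s (Suc j) = stp I (s j) (v j)"
      using rt[rule_format, of "Suc m + j"] rs[of j] rs[of "Suc j"] unfolding tr v_def by auto
  qed
  have vI: "v j \<in> I" for j
    using rt[rule_format, of "Suc m + j"] rs[of j] unfolding tr v_def by auto
  have sinf: "infinite {j. s j = {}}"
  proof
    assume fin: "finite {j. s j = {}}"
    have "{i. r i \<in> Inr ` (Pow ?\<Sigma> \<times> {{}})} \<subseteq> (\<lambda>j. Suc m + j) ` {j. s j = {}}"
    proof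
      fix i assume i: "i \<in> {i. r i \<in> Inr ` (Pow ?\<Sigma> \<times> {{}})}"
      have "\<not> i < n" using bef[of i] i by auto
      then have "Suc m \<le> i" using nm by simp
      then obtain j where ij: "i = Suc m + j" using le_Suc_ex by blast
      then have "s j = {}" using i rs[of j] by auto
      then show "i \<in> (\<lambda>j. Suc m + j) ` {j. s j = {}}" using ij by auto
    qed
    then show False using racc fin finite_subset by blast
  qed
  have vinf: "\<forall>a\<in>I. infinite {j. v j = a}" using p2_sound[OF st sinf] by blast
  have ptr: "\<forall>t<m. (p t, w t, p (Suc t)) \<in> trans A"
  proof (intro allI impI)
    fix t assume t: "t < m"
    have "r t = Inl (p t)" "r (Suc t) = Inl (p (Suc t))" using rp t by auto
    then show "(p t, w t, p (Suc t)) \<in> trans A" using rt[rule_format, of t] unfolding tr by auto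
  qed
  have p0: "p 0 \<in> initial A" using r0 rp[of 0] by auto
  have xs: "\<forall>t<m. w t \<in> ?\<Sigma>" using ww unfolding omega_words_def by auto
  obtain u where ul: "u \<in> nba_lang A" and ux: "\<forall>i<m. u i = w i" and uI: "\<forall>i\<ge>m. u i \<in> I"
    and uinf: "\<forall>a\<in>I. infinite {i. u i = a}"
    using cycle_word[OF wf gd p0 ptr refl xs] by blast
  have wI: "w i \<in> I" if "i \<ge> m" for i
  proof (cases "i = m")
    case True then show ?thesis using wm by simp
  next
    case False
    then have "Suc m \<le> i" using that by simp
    then obtain j where "i = Suc m + j" using le_Suc_ex by blast
    then show ?thesis using vI[of j] unfolding v_def by simp
  qed
  have "parikh_inf u a = parikh_inf w a" for a
  proof (cases "a \<in> I")
    case True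
    have "infinite {i. w i = a}"
    proof
      assume "finite {i. w i = a}"
      moreover have "(\<lambda>j. Suc m + j) ` {j. v j = a} \<subseteq> {i. w i = a}" unfolding v_def by auto
      ultimately have "finite ((\<lambda>j. Suc m + j) ` {j. v j = a})" using finite_subset by blast
      moreover have "inj_on (\<lambda>j. Suc m + j) {j. v j = a}" by (simp add: inj_on_def)
      ultimately have "finite {j. v j = a}" by (rule finite_imageD)
      then show False using vinf True by blast
    qed
    then show ?thesis using uinf True unfolding parikh_inf_def by simp
  next
    case False
    have "{i. u i = a} = {i. w i = a}"
    proof (intro set_eqI iffI)
      fix i assume "i \<in> {i. u i = a}"
      then show "i \<in> {i. w i = a}" using ux uI False by (cases "i < m") (auto simp: not_less)
    next
      fix i assume "i \<in> {i. w i = a}"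
      then show "i \<in> {i. u i = a}" using ux wI False by (cases "i < m") (auto simp: not_less)
    qed
    then show ?thesis unfolding parikh_inf_def by simp
  qed
  then show ?thesis using ul by auto
qed



lemma extract_cycle:
  assumes wf: "nba_wf A" and ul: "u \<in> nba_lang A" and defI: "I = {a. infinite {i. u i = a}}"
  shows "\<exists>r m. r 0 \<in> initial A \<and> (\<forall>t. (r t, u t, r (Suc t)) \<in> trans A) \<and> good A (r m) I \<and> (\<forall>i\<ge>m. u i \<in> I)"
proof -
  let ?\<Sigma> = "alphabet A"
  have finS: "finite ?\<Sigma>" and finQ: "finite (accepting A)" using wf unfolding nba_wf_def by (auto intro: finite_subset)
  obtain r where uw: "u \<in> omega_words ?\<Sigma>" and r0: "r 0 \<in> initial A"
    and rt: "\<forall>i. (r i, u i, r (Suc i)) \<in> trans A" and racc: "infinite {i. r i \<in> accepting A}"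
    using ul unfolding nba_lang_def by blast
  have IS: "I \<subseteq> ?\<Sigma>"
  proof
    fix a assume "a \<in> I"
    then have "infinite {i. u i = a}" using defI by simp
    then obtain i where "u i = a" using not_finite_existsD by blast
    then show "a \<in> ?\<Sigma>" using uw unfolding omega_words_def by auto
  qed
  have finI: "finite I" using IS finS finite_subset by blast
  have "{i. u i \<notin> I} \<subseteq> (\<Union>a\<in>?\<Sigma> - I. {i. u i = a})" using uw unfolding omega_words_def by auto
  moreover have "finite (\<Union>a\<in>?\<Sigma> - I. {i. u i = a})" using finS defI by auto
  ultimately have "finite {i. u i \<notin> I}" using finite_subset by blast
  then obtain N0 where N0: "\<forall>i. u i \<notin> I \<longrightarrow> i < N0"
    unfolding finite_nat_set_iff_bounded by auto
  have "\<exists>q\<in>accepting A. infinite {i. r i = q}"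
  proof (rule ccontr)
    assume "\<not> ?thesis"
    then have "finite (\<Union>q\<in>accepting A. {i. r i = q})" using finQ by auto
    moreover have "{i. r i \<in> accepting A} \<subseteq> (\<Union>q\<in>accepting A. {i. r i = q})" by auto
    ultimately show False using racc finite_subset by blast
  qed
  then obtain q where qacc: "q \<in> accepting A" and qinf: "infinite {i. r i = q}" by blast
  obtain m where m: "m \<ge> N0" "r m = q"
    using qinf unfolding infinite_nat_iff_unbounded_le by blast
  have "\<forall>a\<in>I. \<exists>t\<ge>m. u t = a"
  proof
    fix a assume "a \<in> I"
    then have "infinite {i. u i = a}" using defI by simp
    then show "\<exists>t\<ge>m. u t = a" unfolding infinite_nat_iff_unbounded_le by auto
  qed
  then have "\<exists>t. \<forall>a\<in>I. t a \<ge> m \<and> u (t a) = a" by (rule bchoice)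
  then obtain t where t: "\<forall>a\<in>I. t a \<ge> m \<and> u (t a) = a" by blast
  obtain m2 where m2: "m2 \<ge> Suc (m + (\<Sum>a\<in>I. t a))" "r m2 = q"
    using qinf unfolding infinite_nat_iff_unbounded_le by blast
  have tlt: "t a < m2" if "a \<in> I" for a
  proof -
    have "t a \<le> (\<Sum>a\<in>I. t a)" using member_le_sum[OF that _ finI, of t] by simp
    then show ?thesis using m2 by simp
  qed
  define len where "len = m2 - m"
  define ys where "ys j = u (m + j)" for j
  define qs where "qs j = r (m + j)" for j
  have len: "len > 0" using m2 unfolding len_def by simp
  have Iy: "I = ys ` {..<len}"
  proof
    show "I \<subseteq> ys ` {..<len}"
    proof
      fix a assume a: "a \<in> I"
      have "ys (t a - m) = a" using t a unfolding ys_def by simp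
      moreover have "t a - m < len" using tlt[OF a] t a unfolding len_def by auto
      ultimately show "a \<in> ys ` {..<len}" by force
    qed
  next
    show "ys ` {..<len} \<subseteq> I" using N0 m unfolding ys_def by (auto simp: not_less[symmetric])
  qed
  have q0: "qs 0 = q" and ql: "qs len = q" using m m2 unfolding qs_def len_def by auto
  have qt: "\<forall>j<len. (qs j, ys j, qs (Suc j)) \<in> trans A" using rt unfolding qs_def ys_def by simp
  have "good A (r m) I" unfolding good_def
    by (intro conjI exI[of _ len] exI[of _ ys] exI[of _ qs]) (use len qacc m q0 ql qt Iy in auto)
  moreover have "\<forall>i\<ge>m. u i \<in> I"
  proof (intro allI impI)
    fix i assume "m \<le> i"
    then have "\<not> i < N0" using m by simp
    then show "u i \<in> I" using N0 by blast
  qed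
  ultimately show ?thesis using r0 rt by blast
qed



lemma rearrange:
  assumes finw: "finite {i. w i \<notin> I}" and um: "\<forall>i. u i \<notin> I \<longrightarrow> i < m"
    and ceq: "\<forall>a. a \<notin> I \<longrightarrow> card {i. w i = a} = card {i. u i = a}"
    and infw: "\<forall>a\<in>I. infinite {i. w i = a}" and finI: "finite I"
  shows "\<exists>k\<ge>1. \<exists>w'. block_equiv k w w' \<and> (\<forall>i<m. w' i = u i) \<and> (\<forall>i\<ge>m. w' i \<in> I)
     \<and> (\<forall>a\<in>I. infinite {i. w' i = a}) \<and> (\<forall>i. w' i \<in> range w)"
proof -
  obtain Nw where Nw: "\<forall>i. w i \<notin> I \<longrightarrow> i < Nw"
    using finw unfolding finite_nat_set_iff_bounded by auto
  have "\<forall>a\<in>I. \<exists>N. card {i. i < N \<and> i \<in> {i. w i = a}} \<ge> m"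
    using infw infinite_large by blast
  then have "\<exists>Na. \<forall>a\<in>I. card {i. i < Na a \<and> i \<in> {i. w i = a}} \<ge> m" by (rule bchoice)
  then obtain Na where Na: "\<forall>a\<in>I. card {i. i < Na a \<and> w i = a} \<ge> m" by auto
  define k where "k = Suc (Nw + m + (\<Sum>a\<in>I. Na a))"
  have k1: "k \<ge> 1" and kNw: "Nw \<le> k" and km: "m \<le> k" unfolding k_def by auto
  have kNa: "Na a \<le> k" if "a \<in> I" for a
  proof -
    have "Na a \<le> (\<Sum>a\<in>I. Na a)" using member_le_sum[OF that _ finI, of Na] by simp
    then show ?thesis unfolding k_def by simp
  qed
  define L where "L = map w [0..<k]"
  define x where "x = map u [0..<m]"
  have lx: "length x = m" and lL: "length L = k" unfolding x_def L_def by auto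
  have cL: "count_list L a = card {i. i < k \<and> w i = a}" for a unfolding L_def by (rule cnt_card)
  have cx: "count_list x a = card {i. i < m \<and> u i = a}" for a unfolding x_def by (rule cnt_card)
  have eqF: "count_list x a = count_list L a" if a: "a \<notin> I" for a
  proof -
    have "{i. i < m \<and> u i = a} = {i. u i = a}" using um a by auto
    moreover have "{i. i < k \<and> w i = a} = {i. w i = a}" using Nw a kNw by fastforce
    ultimately show ?thesis using cx cL ceq a by simp
  qed
  have le: "count_list x a \<le> count_list L a" for a
  proof (cases "a \<in> I")
    case True
    have "count_list x a \<le> m" using count_le_length[of x a] lx by simp
    also have "m \<le> card {i. i < Na a \<and> w i = a}" using Na True by blast
    also have "\<dots> \<le> card {i. i < k \<and> w i = a}" using kNa[OF True] by (intro card_mono) auto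
    finally show ?thesis using cL by simp
  next
    case False then show ?thesis using eqF by simp
  qed
  have sub: "mset x \<subseteq># mset L" unfolding subseteq_mset_def using le by (simp add: count_mset)
  obtain rest where rest: "mset rest = mset L - mset x" using ex_mset by blast
  define L' where "L' = x @ rest"
  have mL': "mset L' = mset L" unfolding L'_def using rest sub by (simp add: subset_mset.add_diff_inverse)
  have lL': "length L' = k" using mset_eq_length[OF mL'] lL by simp
  have sL': "set L' = set L" using mset_eq_setD[OF mL'] .
  define w' where "w' i = (if i < k then L' ! i else w i)" for i
  have be: "block_equiv k w w'"
    unfolding block_equiv_def
  proof
    fix i
    show "parikh_fin (block k w i) = parikh_fin (block k w' i)"
    proof (cases "i = 0")
      case True
      have b1: "block k w i = L" unfolding block_def L_def True by simp
      have b2: "block k w' i = L'" unfolding block_def True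
        by (rule nth_equalityI) (auto simp: lL' w'_def)
      show ?thesis unfolding b1 b2 parikh_fin_def
      proof
        fix a
        have "count_list L a = count (mset L) a" by (simp add: count_mset)
        also have "\<dots> = count (mset L') a" using mL' by simp
        also have "\<dots> = count_list L' a" by (simp add: count_mset)
        finally show "count_list L a = count_list L' a" .
      qed
    next
      case False
      have "k \<le> i * k" using False by simp
      then have "block k w' i = block k w i" unfolding block_def w'_def
        by (intro map_cong) (auto dest: le_less_trans)
      then show ?thesis by simp
    qed
  qed
  have pre: "\<forall>i<m. w' i = u i"
  proof (intro allI impI)
    fix i assume i: "i < m"
    then have "w' i = x ! i" unfolding w'_def L'_def using km lx by (simp add: nth_append)
    then show "w' i = u i" unfolding x_def using i by simp
  qed
  have suf: "\<forall>i\<ge>m. w' i \<in> I"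
  proof (intro allI impI)
    fix i assume im: "m \<le> i"
    show "w' i \<in> I"
    proof (cases "i < k")
      case False
      then show ?thesis unfolding w'_def using Nw kNw by (auto simp: not_less)
    next
      case True
      have lr: "length rest = k - m" using lL' lx unfolding L'_def by simp
      have wi: "w' i = rest ! (i - m)" unfolding w'_def L'_def using True im lx by (simp add: nth_append)
      have "i - m < length rest" using lr True im by simp
      then have "rest ! (i - m) \<in> set rest" by simp
      then have pos: "count (mset rest) (rest ! (i - m)) > 0" by simp
      show ?thesis
      proof (rule ccontr)
        assume nI: "w' i \<notin> I"
        have "count (mset rest) (w' i) = count_list L (w' i) - count_list x (w' i)"
          using rest by (simp add: count_mset)
        also have "\<dots> = 0" using eqF[OF nI] by simp
        finally show False using pos wi by simp
      qed
    qed
  qed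
  have inf': "\<forall>a\<in>I. infinite {i. w' i = a}"
  proof
    fix a assume a: "a \<in> I"
    have "{i. w i = a} \<subseteq> {..<k} \<union> {i. w' i = a}" unfolding w'_def by auto
    then show "infinite {i. w' i = a}" using infw a by (meson finite_Un finite_lessThan finite_subset)
  qed
  have rng: "\<forall>i. w' i \<in> range w"
  proof
    fix i
    show "w' i \<in> range w"
    proof (cases "i < k")
      case True
      then have "L' ! i \<in> set L" using sL' lL' by (metis nth_mem)
      then show ?thesis unfolding w'_def L_def using True by auto
    next
      case False then show ?thesis unfolding w'_def by simp
    qed
  qed
  show ?thesis using k1 be pre suf inf' rng by blast
qed



primrec iter :: "'a set \<Rightarrow> 'a set \<Rightarrow> (nat \<Rightarrow> 'a) \<Rightarrow> nat \<Rightarrow> 'a set" where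
  "iter I S0 v 0 = S0"
| "iter I S0 v (Suc j) = stp I (iter I S0 v j) (v j)"

lemma run_B:
  assumes wf: "nba_wf A" and gd: "good A q I" and IS: "I \<subseteq> alphabet A"
    and ws: "w \<in> omega_words (alphabet A)" and r0: "r 0 \<in> initial A"
    and rt: "\<forall>t<m. (r t, w t, r (Suc t)) \<in> trans A" and rm: "r m = q"
    and wI: "\<forall>i\<ge>m. w i \<in> I" and inf: "\<forall>a\<in>I. infinite {i. w i = a}"
  shows "w \<in> nba_lang (mkB A)"
proof -
  have finI: "finite I" using IS wf unfolding nba_wf_def using finite_subset by blast
  define v where "v j = w (Suc m + j)" for j
  define s where "s = iter I (stp I {} (w m)) v"
  define R where "R t = (if t \<le> m then Inl (r t) else Inr (I, s (t - Suc m)))" for t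
  have vI: "\<forall>j. v j \<in> I" unfolding v_def using wI by simp
  have s0: "s 0 \<subseteq> I" unfolding s_def using stp_sub[of I "{}" "w m"] wI by auto
  have st: "\<forall>j. s (Suc j) = stp I (s j) (v j)" unfolding s_def by simp
  have sI: "s j \<subseteq> I" for j
  proof (induction j)
    case 0 then show ?case using s0 .
  next
    case (Suc j) then show ?case using st stp_sub[of I "s j" "v j"] vI by auto
  qed
  have vinf: "\<forall>a\<in>I. infinite {j. v j = a}"
  proof
    fix a assume a: "a \<in> I"
    have "{i. w i = a} \<subseteq> {..Suc m} \<union> (\<lambda>j. Suc m + j) ` {j. v j = a}"
    proof
      fix i assume i: "i \<in> {i. w i = a}"
      show "i \<in> {..Suc m} \<union> (\<lambda>j. Suc m + j) ` {j. v j = a}"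
      proof (cases "i \<le> Suc m")
        case True then show ?thesis by simp
      next
        case False
        then have "i = Suc m + (i - Suc m)" by simp
        moreover have "v (i - Suc m) = a" using False i unfolding v_def by simp
        ultimately show ?thesis by blast
      qed
    qed
    then show "infinite {j. v j = a}" using inf a
      by (meson finite_Un finite_atMost finite_imageI finite_subset)
  qed
  have sinf: "infinite {j. s j = {}}" using p2_complete[OF finI vI vinf st s0] .
  have RT: "(R t, w t, R (Suc t)) \<in> trans (mkB A)" for t
  proof -
    consider "t < m" | "t = m" | "t > m" by linarith
    then show ?thesis
    proof cases
      case 1
      then have "R t = Inl (r t)" "R (Suc t) = Inl (r (Suc t))" unfolding R_def by auto
      then show ?thesis using rt 1 unfolding mkB_def by auto
    next
      case 2
      then have "R t = Inl q" "R (Suc t) = Inr (I, stp I {} (w m))" unfolding R_def s_def using rm by auto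
      then show ?thesis using gd IS wI 2 unfolding mkB_def by auto
    next
      case 3
      define j where "j = t - Suc m"
      have tj: "t = Suc m + j" using 3 unfolding j_def by simp
      have "R t = Inr (I, s j)" "R (Suc t) = Inr (I, stp I (s j) (w t))"
        unfolding R_def using st tj by (auto simp: v_def)
      moreover have "s j \<subseteq> alphabet A" using sI IS by blast
      moreover have "w t \<in> I" using wI 3 by simp
      ultimately show ?thesis using IS unfolding mkB_def by auto
    qed
  qed
  have RA: "infinite {t. R t \<in> accepting (mkB A)}"
  proof
    assume fin: "finite {t. R t \<in> accepting (mkB A)}"
    have "(\<lambda>j. Suc m + j) ` {j. s j = {}} \<subseteq> {t. R t \<in> accepting (mkB A)}"
      using IS unfolding R_def mkB_def by auto
    then have "finite ((\<lambda>j. Suc m + j) ` {j. s j = {}})" using fin finite_subset by blast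
    moreover have "inj_on (\<lambda>j. Suc m + j) {j. s j = {}}" by (simp add: inj_on_def)
    ultimately have "finite {j. s j = {}}" by (rule finite_imageD)
    then show False using sinf by blast
  qed
  have "R 0 \<in> initial (mkB A)" unfolding R_def mkB_def using r0 by simp
  moreover have "w \<in> omega_words (alphabet (mkB A))" using ws by (simp add: mkB_def)
  ultimately show ?thesis using RT RA unfolding nba_lang_def
    by (intro CollectI conjI exI[of _ R]) auto
qed

lemma mkB_complete:
  assumes wf: "nba_wf A" and ww: "w \<in> omega_words (alphabet A)" and ul: "u \<in> nba_lang A"
    and pe: "parikh_inf u = parikh_inf w"
  shows "\<exists>k\<ge>1. \<exists>w'. block_equiv k w w' \<and> w' \<in> nba_lang (mkB A)"
proof -
  let ?\<Sigma> = "alphabet A"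
  define I where "I = {a. infinite {i. u i = a}}"
  obtain r m where r0: "r 0 \<in> initial A" and rt: "\<forall>t. (r t, u t, r (Suc t)) \<in> trans A"
    and gd: "good A (r m) I" and uI: "\<forall>i\<ge>m. u i \<in> I"
    using extract_cycle[OF wf ul I_def] by blast
  have finS: "finite ?\<Sigma>" using wf unfolding nba_wf_def by simp
  have uw: "u \<in> omega_words ?\<Sigma>" using ul unfolding nba_lang_def by simp
  have IS: "I \<subseteq> ?\<Sigma>"
  proof
    fix a assume "a \<in> I"
    then have "infinite {i. u i = a}" using I_def by simp
    then obtain i where "u i = a" using not_finite_existsD by blast
    then show "a \<in> ?\<Sigma>" using uw unfolding omega_words_def by auto
  qed
  have finI: "finite I" using IS finS finite_subset by blast
  have pa: "parikh_inf u a = parikh_inf w a" for a using pe by simp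
  have nI: "finite {i. w i = a} \<and> card {i. w i = a} = card {i. u i = a}" if a: "a \<notin> I" for a
  proof -
    have fu: "finite {i. u i = a}" using a I_def by simp
    then have "parikh_inf u a = enat (card {i. u i = a})" unfolding parikh_inf_def by simp
    then have "parikh_inf w a = enat (card {i. u i = a})" using pa by simp
    then show ?thesis unfolding parikh_inf_def by (auto split: if_splits)
  qed
  have infw: "\<forall>a\<in>I. infinite {i. w i = a}"
  proof
    fix a assume "a \<in> I"
    then have "parikh_inf u a = \<infinity>" using I_def unfolding parikh_inf_def by simp
    then have "parikh_inf w a = \<infinity>" using pa by simp
    then show "infinite {i. w i = a}" unfolding parikh_inf_def by (auto split: if_splits)
  qed
  have "{i. w i \<notin> I} \<subseteq> (\<Union>a\<in>?\<Sigma> - I. {i. w i = a})" using ww unfolding omega_words_def by auto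
  moreover have "finite (\<Union>a\<in>?\<Sigma> - I. {i. w i = a})" using finS nI by auto
  ultimately have finw: "finite {i. w i \<notin> I}" using finite_subset by blast
  have um: "\<forall>i. u i \<notin> I \<longrightarrow> i < m" using uI not_le by blast
  have ceq: "\<forall>a. a \<notin> I \<longrightarrow> card {i. w i = a} = card {i. u i = a}" using nI by blast
  obtain k w' where k: "k \<ge> 1" and be: "block_equiv k w w'" and pre: "\<forall>i<m. w' i = u i"
    and suf: "\<forall>i\<ge>m. w' i \<in> I" and inf': "\<forall>a\<in>I. infinite {i. w' i = a}" and rng: "\<forall>i. w' i \<in> range w"
    using rearrange[OF finw um ceq infw finI] by blast
  have w's: "w' \<in> omega_words ?\<Sigma>" unfolding omega_words_def
  proof (intro CollectI allI)
    fix i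
    obtain j where "w' i = w j" using rng by blast
    then show "w' i \<in> ?\<Sigma>" using ww unfolding omega_words_def by simp
  qed
  have rt': "\<forall>t<m. (r t, w' t, r (Suc t)) \<in> trans A" using rt pre by simp
  have "w' \<in> nba_lang (mkB A)"
    using run_B[OF wf gd IS w's r0 rt' refl suf inf'] .
  then show ?thesis using k be by blast
qed

theorem theorem4:
  fixes A :: "('q, 'a) nba"
  assumes "nba_wf A"
  shows "\<exists>B :: (nat, 'a) nba. nba_wf B \<and> alphabet B = alphabet A \<and> J_ex_box B = J A"
proof -
  obtain B :: "(nat, 'a) nba" where B: "nba_wf B" "alphabet B = alphabet (mkB A)"
    "nba_lang B = nba_lang (mkB A)"
    using exists_nat_version[OF mkB_wf[OF assms]] by blast
  have aB: "alphabet B = alphabet A" using B by (simp add: mkB_def)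
  have "J_ex_box B = J A"
  proof
    show "J_ex_box B \<subseteq> J A"
    proof
      fix w assume "w \<in> J_ex_box B"
      then obtain k w' where w: "w \<in> omega_words (alphabet A)" and k: "k \<ge> 1"
        and be: "block_equiv k w w'" and wl: "w' \<in> nba_lang (mkB A)"
        unfolding J_ex_box_def using aB B by auto
      obtain u where "u \<in> nba_lang A" "parikh_inf u = parikh_inf w'" using mkB_sound[OF assms wl] by blast
      moreover have "parikh_inf w = parikh_inf w'" using block_equiv_parikh[OF k be] .
      ultimately show "w \<in> J A" unfolding J_def using w by auto
    qed
  next
    show "J A \<subseteq> J_ex_box B"
    proof
      fix w assume "w \<in> J A"
      then obtain u where w: "w \<in> omega_words (alphabet A)" and "parikh_inf u = parikh_inf w"
        and "u \<in> nba_lang A" unfolding J_def by blast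
      then obtain k w' where "k \<ge> 1" "block_equiv k w w'" "w' \<in> nba_lang (mkB A)"
        using mkB_complete[OF assms] by blast
      then show "w \<in> J_ex_box B" unfolding J_ex_box_def using w aB B by auto
    qed
  qed
  then show ?thesis using B(1) aB by blast
qed

end
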